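(* Let $n,k\ge 1$ be integers and let $A=(A_{ij})_{1\le i\le n,\,1\le j\le k}$ be an $n\times k$ matrix whose $nk$ entries are independent random variables, each uniformly distributed on $[0,1]$. Run the following algorithm on $A$: \begin{verbatim} minmax = infinity FOR i=1 TO n max = -infinity FOR j=1 TO k t = A[i][j] IF t > max THEN max = t IF t > minmax THEN BREAK IF max < minmax THEN minmax = max \end{verbatim} (it outputs $\min_i\max_j A_{ij}$). Each execution of the instruction t = A[i][j] counts as reading one matrix element. Let $M_{nk}(1)$ denote the expected total number of matrix elements read by the algorithm. Then $$M_{nk}(1)= nk + \sum_{l=1}^{k-1} \sum_{j=1}^{n-1}\binom{n}{j+1} (-1)^{j} \frac{l}{l+jk} = n+k-1+ \sum_{l=1}^{k-1} \sum_{j=1}^{n-1} \prod_{r=1}^{j}\frac{rk}{rk + l}.$$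
   Context: Here $n$ is the number of rows and $k$ the number of columns of the matrix. The BREAK instruction exits the inner loop over $j$ (after the element $A_{ij}$ has been read), and the algorithm then proceeds to the final IF statement for row $i$ and to the next row. Empty sums are zero. *)

theory Defs
  imports "HOL-Probability.Probability"
begin

text \<open>Arguments: the rw, the current
  value of minmax, the remaining column indices, the current value of max.\<close>
fun inner_loop :: "(nat \<Rightarrow> real) \<Rightarrow> ereal \<Rightarrow> nat list \<Rightarrow> ereal \<Rightarrow> ereal \<times> nat" where
  "inner_loop rw mm [] mx = (mx, 0)"
| "inner_loop rw mm (j # js) mx =
     (let t = ereal (rw j);
          mx' = (if t > mx then t else mx)
      in if t > mm then (mx', 1)
         else (let (m2, c) = inner_loop rw mm js mx' in (m2, Suc c)))"

fun outer_loop :: "(nat \<Rightarrow> nat \<Rightarrow> real) \<Rightarrow> nat \<Rightarrow> ereal \<Rightarrow> nat list \<Rightarrow> ereal \<times> nat" where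
  "outer_loop A k mm [] = (mm, 0)"
| "outer_loop A k mm (i # is) =
     (let (mx, c) = inner_loop (A i) mm [0..<k] (-\<infinity>);
          mm' = (if mx < mm then mx else mm);
          (r, c2) = outer_loop A k mm' is
      in (r, c + c2))"

text \<open>Number of matrix elements read by the algorithm on an n x k matrix
  (rows 0..n-1, columns 0..k-1).\<close>
definition reads :: "nat \<Rightarrow> nat \<Rightarrow> (nat \<Rightarrow> nat \<Rightarrow> real) \<Rightarrow> nat" where
  "reads n k A = snd (outer_loop A k \<infinity> [0..<n])"

definition matrix_measure :: "nat \<Rightarrow> nat \<Rightarrow> (nat \<times> nat \<Rightarrow> real) measure" where
  "matrix_measure n k = PiM ({..<n} \<times> {..<k}) (\<lambda>_. uniform_measure lborel {0..1::real})"

end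

theory Submission
  imports Defs
begin


lemma inner_count:
  "snd (inner_loop rw mm js mx) = (\<Sum>l<length js. if \<forall>j\<in>set (take l js). ereal (rw j) \<le> mm then 1 else 0)"
proof (induction js arbitrary: mx)
  case Nil then show ?case by simp
next
  case (Cons j js)
  show ?case
  proof (cases "ereal (rw j) > mm")
    case True
    then show ?thesis
      by (simp add: Let_def sum.lessThan_Suc_shift not_le[symmetric] del: sum.lessThan_Suc)
  next
    case False
    then show ?thesis using Cons[of "if ereal (rw j) > mx then ereal (rw j) else mx"]
      by (simp add: Let_def sum.lessThan_Suc_shift split_beta not_less del: sum.lessThan_Suc)
  qed
qed

lemma inner_mm:
  "(y \<le> (if fst (inner_loop rw mm js mx) < mm then fst (inner_loop rw mm js mx) else mm))
    \<longleftrightarrow> (y \<le> mm \<and> (y \<le> mx \<or> (\<exists>j\<in>set js. y \<le> ereal (rw j))))"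
proof (induction js arbitrary: mx)
  case Nil then show ?case by (auto simp: not_less)
next
  case (Cons j js)
  show ?case
  proof (cases "ereal (rw j) > mm")
    case True
    then show ?thesis
      by (auto simp add: Let_def not_less)
  next
    case False
    have IH: "(y \<le> (if fst (inner_loop rw mm js (if ereal (rw j) > mx then ereal (rw j) else mx)) < mm then fst (inner_loop rw mm js (if ereal (rw j) > mx then ereal (rw j) else mx)) else mm))
    \<longleftrightarrow> (y \<le> mm \<and> (y \<le> (if ereal (rw j) > mx then ereal (rw j) else mx) \<or> (\<exists>j\<in>set js. y \<le> ereal (rw j))))"
      by (rule Cons)
    have eq: "fst (inner_loop rw mm (j#js) mx) = fst (inner_loop rw mm js (if ereal (rw j) > mx then ereal (rw j) else mx))"
      using False by (simp add: Let_def split_beta)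
    show ?thesis unfolding eq IH
      by (auto simp: not_less split: if_splits)
  qed
qed

lemma all_less_Suc_split: "(\<forall>q<Suc p. P q) \<longleftrightarrow> P 0 \<and> (\<forall>q<p. P (Suc q))"
  by (auto simp: less_Suc_eq_0_disj)

lemma set_take_upt: "l \<le> k \<Longrightarrow> set (take l [0..<k]) = {0..<l}"
  by (simp add: take_upt min_def)

lemma outer_count:
  "snd (outer_loop A k mm is) = (\<Sum>p<length is. \<Sum>l<k.
      if (\<forall>j<l. ereal (A (is!p) j) \<le> mm \<and> (\<forall>q<p. \<exists>j'<k. A (is!p) j \<le> A (is!q) j')) then 1 else 0)"
proof (induction "is" arbitrary: mm)
  case Nil then show ?case by simp
next
  case (Cons i "is")
  define mx where "mx = fst (inner_loop (A i) mm [0..<k] (-\<infinity>))"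
  define mm' where "mm' = (if mx < mm then mx else mm)"
  have mm'_iff: "ereal x \<le> mm' \<longleftrightarrow> ereal x \<le> mm \<and> (\<exists>j'<k. x \<le> A i j')" for x
    unfolding mm'_def mx_def inner_mm by auto
  have c: "snd (inner_loop (A i) mm [0..<k] (-\<infinity>)) = (\<Sum>l<k. if \<forall>j<l. ereal (A i j) \<le> mm then 1 else 0)"
    unfolding inner_count by (intro sum.cong) (auto simp: set_take_upt)
  have "snd (outer_loop A k mm (i # is)) = snd (inner_loop (A i) mm [0..<k] (-\<infinity>)) + snd (outer_loop A k mm' is)"
    by (simp add: Let_def split_beta mm'_def mx_def)
  also have "\<dots> = (\<Sum>l<k. if \<forall>j<l. ereal (A i j) \<le> mm then 1 else 0) +
     (\<Sum>p<length is. \<Sum>l<k.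
      if (\<forall>j<l. ereal (A (is!p) j) \<le> mm' \<and> (\<forall>q<p. \<exists>j'<k. A (is!p) j \<le> A (is!q) j')) then 1 else 0)"
    unfolding c Cons ..
  also have "\<dots> = (\<Sum>p<length (i#is). \<Sum>l<k.
      if (\<forall>j<l. ereal (A ((i#is)!p) j) \<le> mm \<and> (\<forall>q<p. \<exists>j'<k. A ((i#is)!p) j \<le> A ((i#is)!q) j')) then 1 else 0)"
    unfolding length_Cons sum.lessThan_Suc_shift mm'_iff all_less_Suc_split
    by (simp add: conj_ac)
  finally show ?case .
qed

lemma reads_eq:
  "reads n k A = (\<Sum>i<n. \<Sum>l<k. if (\<forall>j<l. \<forall>i'<i. \<exists>j'<k. A i j \<le> A i' j') then 1 else 0)"
  unfolding reads_def outer_count by (intro sum.cong refl) auto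



definition U :: "real measure" where "U = uniform_measure lborel {0..1}"

lemma prob_space_U: "prob_space U"
  unfolding U_def by (rule prob_space_uniform_measure) auto

lemma space_U[simp]: "space U = UNIV" and sets_U[simp, measurable_cong]: "sets U = sets borel"
  unfolding U_def by auto

lemma psf: "product_sigma_finite (\<lambda>_::nat\<times>nat. U)"
  unfolding product_sigma_finite_def by (auto simp: prob_space_U prob_space_imp_sigma_finite)

lemma prob_space_PU: "prob_space (PiM I (\<lambda>_::nat\<times>nat. U))"
  by (rule prob_space_PiM) (rule prob_space_U)

definition rel :: "bool \<Rightarrow> real \<Rightarrow> real \<Rightarrow> bool" where
  "rel b t z = (if b then t < z else t \<le> z)"

lemma rel_measurable[measurable]: "Measurable.pred (borel \<Otimes>\<^sub>M borel) (\<lambda>(t,z). rel b t z)"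
  unfolding rel_def by (cases b) auto

lemma emeasure_U_rel: "emeasure U {t. rel b t z} = ennreal (max 0 (min 1 z))"
proof -
  have s: "{t. rel b t z} \<in> sets borel" unfolding rel_def by (cases b) auto
  have "emeasure U {t. rel b t z} = emeasure lborel ({0..1} \<inter> {t. rel b t z}) / emeasure lborel {0..1::real}"
    unfolding U_def using s by (subst emeasure_uniform_measure) auto
  also have "\<dots> = emeasure lborel ({0..1} \<inter> {t. rel b t z})" by (simp add: divide_ennreal_def)
  also have "\<dots> = ennreal (max 0 (min 1 z))"
  proof (cases "z < 0")
    case True
    then have "{0..1} \<inter> {t. rel b t z} = {}" by (auto simp: rel_def)
    then show ?thesis using True by simp
  next
    case False
    show ?thesis
    proof (cases "z \<le> 1")
      case True
      have "emeasure lborel ({0..1} \<inter> {t. rel b t z}) = emeasure lborel {0..z}"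
      proof (cases b)
        case True
        then have "{0..1} \<inter> {t. rel b t z} = {0..<z}" using \<open>z\<le>1\<close> by (auto simp: rel_def)
        then show ?thesis using \<open>\<not> z < 0\<close> by simp
      next
        case b: False
        then have "{0..1} \<inter> {t. rel b t z} = {0..z}" using \<open>z\<le>1\<close> by (auto simp: rel_def)
        then show ?thesis by simp
      qed
      then show ?thesis using True False by simp
    next
      case f2: False
      then have "{0..1} \<inter> {t. rel b t z} = {0..1}" by (auto simp: rel_def)
      then show ?thesis using f2 by simp
    qed
  qed
  finally show ?thesis .
qed

lemma nn_integral_U_power: "(\<integral>\<^sup>+z. ennreal (max 0 (min 1 z)) ^ m \<partial>U) = ennreal (1 / (real m + 1))"
proof -
  have "(\<integral>\<^sup>+z. ennreal (max 0 (min 1 z)) ^ m \<partial>U) =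
     (\<integral>\<^sup>+z. ennreal (max 0 (min 1 z)) ^ m * indicator {0..1} z \<partial>lborel) / emeasure lborel {0..1::real}"
    unfolding U_def by (subst nn_integral_uniform_measure) auto
  also have "\<dots> = (\<integral>\<^sup>+z. ennreal (max 0 (min 1 z)) ^ m * indicator {0..1} z \<partial>lborel)"
    by (simp add: divide_ennreal_def)
  also have "\<dots> = (\<integral>\<^sup>+z. ennreal (z ^ m) * indicator {0..1} z \<partial>lborel)"
  proof (rule nn_integral_cong)
    fix z :: real
    show "ennreal (max 0 (min 1 z)) ^ m * indicator {0..1} z = ennreal (z ^ m) * indicator {0..1} z"
    proof (cases "z \<in> {0..1}")
      case True
      then have "max 0 (min 1 z) = z" by auto
      then show ?thesis by (simp add: ennreal_power)
    qed simp
  qed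
  also have "\<dots> = ennreal (1 ^ (m+1) / (real m+1) - 0 ^ (m+1) / (real m+1))"
  proof (rule nn_integral_FTC_Icc[where F="\<lambda>z. z ^ (m+1) / (real m+1)"])
    fix z :: real
    have "((\<lambda>z. z ^ (m+1) / (real m+1)) has_real_derivative (real (m+1) * z ^ (m+1 - Suc 0)) / (real m+1)) (at z)"
      by (intro DERIV_cdivide DERIV_pow)
    moreover have "(real (m+1) * z ^ (m+1 - Suc 0)) / (real m+1) = z ^ m"
      by (simp add: add.commute)
    ultimately show "((\<lambda>z. z ^ (m+1) / (real m+1)) has_real_derivative z ^ m) (at z)"
      by simp
  qed auto
  also have "\<dots> = ennreal (1 / (real m + 1))" by simp
  finally show ?thesis .
qed

lemma prod_indicator_ennreal:
  "finite D \<Longrightarrow> (\<Prod>\<delta>\<in>D. indicator A (x \<delta>) :: ennreal) = (if \<forall>\<delta>\<in>D. x \<delta> \<in> A then 1 else 0)"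
  by (induction D rule: finite_induct) (auto split: split_indicator)

lemma pred_rel_PiM:
  assumes "\<delta> \<in> I" "\<gamma> \<in> I"
  shows "{x \<in> space (PiM I (\<lambda>_::nat\<times>nat. U)). rel b (x \<delta>) (x \<gamma>)} \<in> sets (PiM I (\<lambda>_. U))"
proof -
  have "(\<lambda>x. (x \<delta>, x \<gamma>)) \<in> PiM I (\<lambda>_. U) \<rightarrow>\<^sub>M borel \<Otimes>\<^sub>M borel"
    using assms by measurable
  from measurable_compose[OF this rel_measurable] show ?thesis
    by (simp add: pred_def)
qed

lemma core:
  fixes J :: "(nat\<times>nat) set"
  assumes J: "finite J" "\<gamma> \<notin> J" "D \<subseteq> J"
  shows "emeasure (PiM (insert \<gamma> J) (\<lambda>_. U)) {x \<in> space (PiM (insert \<gamma> J) (\<lambda>_. U)). \<forall>\<delta>\<in>D. rel b (x \<delta>) (x \<gamma>)}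
     = ennreal (1 / (real (card D) + 1))"
proof -
  let ?M = "PiM (insert \<gamma> J) (\<lambda>_. U)"
  define S where "S = {x \<in> space ?M. \<forall>\<delta>\<in>D. rel b (x \<delta>) (x \<gamma>)}"
  have fD: "finite D" using J finite_subset by blast
  have S: "S \<in> sets ?M"
    unfolding S_def
    by (rule sets.sets_Collect_finite_All[OF _ fD], rule pred_rel_PiM) (use J in auto)
  have Rs: "{t. rel b t z} \<in> sets borel" for z
    using rel_measurable[of b] by (cases b) (auto simp: rel_def)
  have inner: "(\<integral>\<^sup>+ x. indicator S (x(\<gamma> := z)) \<partial>PiM J (\<lambda>_. U)) = ennreal (max 0 (min 1 z)) ^ card D" for z
  proof -
    have "(\<integral>\<^sup>+ x. indicator S (x(\<gamma> := z)) \<partial>PiM J (\<lambda>_. U)) =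
      (\<integral>\<^sup>+ x. (\<Prod>\<delta>\<in>J. (\<lambda>\<delta> t. if \<delta> \<in> D then indicator {t. rel b t z} t else 1) \<delta> (x \<delta>)) \<partial>PiM J (\<lambda>_. U))"
    proof (rule nn_integral_cong)
      fix x assume x: "x \<in> space (PiM J (\<lambda>_. U))"
      have xs: "x(\<gamma> := z) \<in> space ?M"
        using x by (auto simp: space_PiM PiE_def extensional_def)
      have ng: "\<forall>\<delta>\<in>D. \<delta> \<noteq> \<gamma>" using J by auto
      have ind: "indicator S (x(\<gamma> := z)) = (if \<forall>\<delta>\<in>D. x \<delta> \<in> {t. rel b t z} then 1 else (0::ennreal))"
        using xs ng unfolding S_def by (auto split: split_indicator)
      have "(\<Prod>\<delta>\<in>J. if \<delta> \<in> D then indicator {t. rel b t z} (x \<delta>) else (1::ennreal))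
          = (\<Prod>\<delta>\<in>{\<delta>\<in>J. \<delta> \<in> D}. indicator {t. rel b t z} (x \<delta>))"
        by (simp add: prod.inter_filter J)
      also have "{\<delta>\<in>J. \<delta> \<in> D} = D" using J by auto
      finally have p: "(\<Prod>\<delta>\<in>J. if \<delta> \<in> D then indicator {t. rel b t z} (x \<delta>) else (1::ennreal))
          = (\<Prod>\<delta>\<in>D. indicator {t. rel b t z} (x \<delta>))" .
      have q: "indicator S (x(\<gamma> := z)) = (\<Prod>\<delta>\<in>D. indicator {t. rel b t z} (x \<delta>) :: ennreal)"
        unfolding ind prod_indicator_ennreal[OF fD] ..
      show "indicator S (x(\<gamma> := z)) = (\<Prod>\<delta>\<in>J. (\<lambda>\<delta> t. if \<delta> \<in> D then indicator {t. rel b t z} t else 1) \<delta> (x \<delta>) :: ennreal)"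
        by (simp only: q p)
    qed
    also have "\<dots> = (\<Prod>\<delta>\<in>J. \<integral>\<^sup>+t. (if \<delta> \<in> D then indicator {t. rel b t z} t else 1) \<partial>U)"
      by (rule product_sigma_finite.product_nn_integral_prod[OF psf]) (use J Rs in auto)
    also have "\<dots> = (\<Prod>\<delta>\<in>J. if \<delta> \<in> D then ennreal (max 0 (min 1 z)) else 1)"
    proof (rule prod.cong)
      fix \<delta> assume "\<delta> \<in> J"
      show "(\<integral>\<^sup>+t. (if \<delta> \<in> D then indicator {t. rel b t z} t else 1) \<partial>U) = (if \<delta> \<in> D then ennreal (max 0 (min 1 z)) else 1)"
        using Rs[of z] prob_space.emeasure_space_1[OF prob_space_U]
        by (auto simp: emeasure_U_rel)
    qed simp
    also have "\<dots> = (\<Prod>\<delta>\<in>{\<delta>\<in>J. \<delta> \<in> D}. ennreal (max 0 (min 1 z)))"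
      by (rule prod.inter_filter[symmetric, OF J(1)])
    also have "{\<delta>\<in>J. \<delta> \<in> D} = D" using J by auto
    also have "(\<Prod>\<delta>\<in>D. ennreal (max 0 (min 1 z))) = ennreal (max 0 (min 1 z)) ^ card D"
      by (rule prod_constant)
    finally show ?thesis .
  qed
  have "emeasure ?M S = (\<integral>\<^sup>+ x. indicator S x \<partial>?M)"
    using S by simp
  also have "\<dots> = (\<integral>\<^sup>+ z. (\<integral>\<^sup>+ x. indicator S (x(\<gamma> := z)) \<partial>PiM J (\<lambda>_. U)) \<partial>U)"
    by (rule product_sigma_finite.product_nn_integral_insert_rev[OF psf]) (use J S in auto)
  also have "\<dots> = (\<integral>\<^sup>+ z. ennreal (max 0 (min 1 z)) ^ card D \<partial>U)"
    by (simp add: inner)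
  also have "\<dots> = ennreal (1 / (real (card D) + 1))"
    by (rule nn_integral_U_power)
  finally show ?thesis unfolding S_def .
qed

lemma core_measure:
  fixes I :: "(nat\<times>nat) set"
  assumes "finite I" "\<gamma> \<in> I" "D \<subseteq> I" "\<gamma> \<notin> D"
  shows "measure (PiM I (\<lambda>_. U)) {x \<in> space (PiM I (\<lambda>_. U)). \<forall>\<delta>\<in>D. rel b (x \<delta>) (x \<gamma>)}
     = 1 / (real (card D) + 1)"
proof -
  interpret P: prob_space "PiM I (\<lambda>_. U)" by (rule prob_space_PU)
  have I: "I = insert \<gamma> (I - {\<gamma>})" using assms by auto
  have "emeasure (PiM I (\<lambda>_. U)) {x \<in> space (PiM I (\<lambda>_. U)). \<forall>\<delta>\<in>D. rel b (x \<delta>) (x \<gamma>)}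
     = ennreal (1 / (real (card D) + 1))"
    by (subst (1 2) I, rule core) (use assms in auto)
  then show ?thesis by (simp add: P.emeasure_eq_measure)
qed

lemma key:
  fixes I :: "(nat\<times>nat) set"
  assumes I: "finite I" "B \<subseteq> I" "C \<subseteq> I" "B \<inter> C = {}" "C \<noteq> {}"
  shows "measure (PiM I (\<lambda>_. U)) {x \<in> space (PiM I (\<lambda>_. U)). \<forall>\<beta>\<in>B. \<exists>\<gamma>\<in>C. rel True (x \<beta>) (x \<gamma>)}
     = real (card C) / (real (card B) + real (card C))"
proof -
  let ?M = "PiM I (\<lambda>_. U)"
  interpret P: prob_space ?M by (rule prob_space_PU)
  define G where "G = {x \<in> space ?M. \<forall>\<beta>\<in>B. \<exists>\<gamma>\<in>C. rel True (x \<beta>) (x \<gamma>)}"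
  define F where "F b \<gamma> = {x \<in> space ?M. \<forall>\<delta>\<in>(B \<union> C) - {\<gamma>}. rel b (x \<delta>) (x \<gamma>)}" for b \<gamma>
  have fB: "finite B" and fC: "finite C" using I finite_subset by blast+
  have cardD: "card ((B \<union> C) - {\<gamma>}) = card B + card C - 1" if "\<gamma> \<in> C" for \<gamma>
    using that fB fC I by (simp add: card_Un_disjoint)
  have Fm: "measure ?M (F b \<gamma>) = 1 / (real (card B) + real (card C))" if "\<gamma> \<in> C" for b \<gamma>
  proof -
    have "measure ?M (F b \<gamma>) = 1 / (real (card ((B \<union> C) - {\<gamma>})) + 1)"
      unfolding F_def by (rule core_measure) (use I that in auto)
    also have "\<dots> = 1 / (real (card B) + real (card C))"
      using cardD[OF that] that fC card_gt_0_iff[of C] by (auto simp: of_nat_diff)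
    finally show ?thesis .
  qed
  have Fs: "F b \<gamma> \<in> sets ?M" if "\<gamma> \<in> C" for b \<gamma>
    unfolding F_def
    by (rule sets.sets_Collect_finite_All, rule pred_rel_PiM) (use I that fB fC in auto)
  have Gs: "G \<in> sets ?M"
    unfolding G_def
    by (rule sets.sets_Collect_finite_All[OF _ fB], rule sets.sets_Collect_finite_Ex[OF _ fC], rule pred_rel_PiM)
       (use I in auto)
  have lower: "(\<Union>\<gamma>\<in>C. F True \<gamma>) \<subseteq> G"
  proof
    fix x assume "x \<in> (\<Union>\<gamma>\<in>C. F True \<gamma>)"
    then obtain \<gamma> where "\<gamma> \<in> C" "x \<in> F True \<gamma>" by auto
    then show "x \<in> G" using I unfolding F_def G_def by fastforce
  qed
  have disj: "disjoint_family_on (F True) C"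
    unfolding disjoint_family_on_def
  proof (intro ballI impI)
    fix m m' assume mm: "m \<in> C" "m' \<in> C" "m \<noteq> m'"
    show "F True m \<inter> F True m' = {}"
    proof (rule ccontr)
      assume "F True m \<inter> F True m' \<noteq> {}"
      then obtain x where "x \<in> F True m" "x \<in> F True m'" by blast
      then have "x m' < x m" "x m < x m'" using mm unfolding F_def rel_def by auto
      then show False by simp
    qed
  qed
  have "measure ?M (\<Union>\<gamma>\<in>C. F True \<gamma>) = (\<Sum>\<gamma>\<in>C. measure ?M (F True \<gamma>))"
    by (rule P.finite_measure_finite_Union[OF fC _ disj]) (use Fs in auto)
  also have "\<dots> = real (card C) / (real (card B) + real (card C))"
    using Fm by simp
  finally have le1: "real (card C) / (real (card B) + real (card C)) \<le> measure ?M G"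
    using P.finite_measure_mono[OF lower Gs] by simp
  have upper: "G \<subseteq> (\<Union>\<gamma>\<in>C. F False \<gamma>)"
  proof
    fix x assume x: "x \<in> G"
    have "Max (x ` C) \<in> x ` C"
      using fC I by (intro Max_in) auto
    then obtain \<gamma> where \<gamma>: "\<gamma> \<in> C" "x \<gamma> = Max (x ` C)"
      by (metis imageE)
    have "x \<in> F False \<gamma>"
      unfolding F_def rel_def
    proof (intro CollectI conjI ballI)
      show "x \<in> space ?M" using x G_def by auto
      fix \<delta> assume \<delta>: "\<delta> \<in> B \<union> C - {\<gamma>}"
      show "if False then x \<delta> < x \<gamma> else x \<delta> \<le> x \<gamma>"
      proof (cases "\<delta> \<in> C")
        case True then show ?thesis using \<gamma> fC by simp
      next
        case False
        then have "\<delta> \<in> B" using \<delta> by auto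
        then obtain \<gamma>' where "\<gamma>' \<in> C" "x \<delta> < x \<gamma>'" using x unfolding G_def rel_def by auto
        moreover have "x \<gamma>' \<le> x \<gamma>" using \<open>\<gamma>' \<in> C\<close> \<gamma> fC by simp
        ultimately show ?thesis by simp
      qed
    qed
    then show "x \<in> (\<Union>\<gamma>\<in>C. F False \<gamma>)" using \<gamma> by auto
  qed
  have "measure ?M G \<le> measure ?M (\<Union>\<gamma>\<in>C. F False \<gamma>)"
    by (rule P.finite_measure_mono[OF upper]) (use Fs fC in auto)
  also have "\<dots> \<le> (\<Sum>\<gamma>\<in>C. measure ?M (F False \<gamma>))"
    by (rule P.finite_measure_subadditive_finite[OF fC]) (use Fs in auto)
  also have "\<dots> = real (card C) / (real (card B) + real (card C))"
    using Fm by simp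
  finally show ?thesis using le1 unfolding G_def by linarith
qed

lemma prod_one_minus:
  fixes f :: "'a \<Rightarrow> real"
  assumes "finite A"
  shows "(\<Prod>a\<in>A. 1 - f a) = (\<Sum>T\<in>Pow A. (-1) ^ card T * (\<Prod>a\<in>T. f a))"
proof -
  have "(\<Prod>a\<in>A. 1 - f a) = (\<Prod>a\<in>A. (- f a) + 1)" by simp
  also have "\<dots> = (\<Sum>T\<in>Pow A. (\<Prod>a\<in>T. - f a) * (\<Prod>a\<in>A - T. 1))"
    by (rule prod_add[OF assms])
  also have "\<dots> = (\<Sum>T\<in>Pow A. (-1) ^ card T * (\<Prod>a\<in>T. f a))"
    by (intro sum.cong refl) (simp add: prod_uminus)
  finally show ?thesis .
qed

lemma prod_ind:
  "finite A \<Longrightarrow> (\<Prod>a\<in>A. (if P a then 1 else 0 :: real)) = (if \<forall>a\<in>A. P a then 1 else 0)"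
  by (induction A rule: finite_induct) auto

lemma swap_ex_all:
  fixes x :: "nat \<Rightarrow> real"
  assumes "0 < k"
  shows "(\<forall>j<l. \<exists>j'<k. y j \<le> x j') \<longleftrightarrow> (\<exists>j'<k. \<forall>j<l. y j \<le> x j')"
proof
  assume h: "\<forall>j<l. \<exists>j'<k. y j \<le> x j'"
  have "Max (x ` {..<k}) \<in> x ` {..<k}"
    using assms by (intro Max_in) auto
  then obtain m where m: "m \<in> {..<k}" "x m = Max (x ` {..<k})"
    by (metis imageE)
  have "\<forall>j<l. y j \<le> x m"
  proof (intro allI impI)
    fix j assume "j < l"
    then obtain j' where "j' < k" "y j \<le> x j'" using h by auto
    moreover have "x j' \<le> x m" using m \<open>j' < k\<close> by simp
    ultimately show "y j \<le> x m" by simp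
  qed
  then show "\<exists>j'<k. \<forall>j<l. y j \<le> x j'" using m by auto
qed auto

lemma negQ: fixes x :: "nat\<times>nat \<Rightarrow> real" and k l i :: nat
  shows "(\<not> (\<forall>j'<k. \<exists>j<l. x (i',j') < x (i,j))) \<longleftrightarrow> (\<exists>j'<k. \<forall>j<l. x (i,j) \<le> x (i',j'))"
  by (meson not_less)

lemma measure_E:
  fixes i n l k :: nat
  assumes "i < n" "1 \<le> l" "l \<le> k"
  shows "measure (PiM ({..<n}\<times>{..<k}) (\<lambda>_. U))
     {x\<in>space (PiM ({..<n}\<times>{..<k}) (\<lambda>_. U)). \<forall>j<l. \<forall>i'<i. \<exists>j'<k. x (i,j) \<le> x (i',j')}
   = (\<Sum>T\<in>Pow {..<i}. (-1) ^ card T * (real l / (real (card T * k) + real l)))"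
proof -
  define I where "I = {..<n}\<times>{..<k}"
  let ?M = "PiM I (\<lambda>_. U)"
  interpret P: prob_space ?M by (rule prob_space_PU)
  define E where "E = {x\<in>space ?M. \<forall>j<l. \<forall>i'<i. \<exists>j'<k. x (i,j) \<le> x (i',j')}"
  define G where "G T = {x\<in>space ?M. \<forall>\<beta>\<in>T\<times>{..<k}. \<exists>\<gamma>\<in>{i}\<times>{..<l}. rel True (x \<beta>) (x \<gamma>)}" for T
  have k0: "0 < k" using assms by simp
  have fI: "finite I" unfolding I_def by simp
  have Gs: "G T \<in> sets ?M" if "T \<subseteq> {..<i}" for T
    unfolding G_def
    by (rule sets.sets_Collect_finite_All, rule sets.sets_Collect_finite_Ex, rule pred_rel_PiM)
       (use that assms finite_subset in \<open>auto simp: I_def\<close>)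
  have E_alt: "E = {x\<in>space ?M. \<forall>(j,i')\<in>{..<l}\<times>{..<i}. \<exists>j'\<in>{..<k}. rel False (x (i,j)) (x (i',j'))}"
    unfolding E_def rel_def by auto
  have Es: "E \<in> sets ?M"
    unfolding E_alt
    by (rule sets.sets_Collect_finite_All, clarify, rule sets.sets_Collect_finite_Ex, rule pred_rel_PiM)
       (use assms in \<open>auto simp: I_def\<close>)
  have pw: "indicator E x = (\<Sum>T\<in>Pow {..<i}. (-1) ^ card T * indicator (G T) x :: real)" if x: "x \<in> space ?M" for x
  proof -
    define Q where "Q i' = (\<forall>j'<k. \<exists>j<l. x (i',j') < x (i,j))" for i'
    have "x \<in> E \<longleftrightarrow> (\<forall>i'\<in>{..<i}. \<not> Q i')"
    proof -
      have "\<not> Q i' \<longleftrightarrow> (\<exists>j'<k. \<forall>j<l. x (i,j) \<le> x (i',j'))" for i'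
        unfolding Q_def by (rule negQ)
      then have "\<not> Q i' \<longleftrightarrow> (\<forall>j<l. \<exists>j'<k. x (i,j) \<le> x (i',j'))" for i'
        using swap_ex_all[OF k0, of l "\<lambda>j. x (i,j)" "\<lambda>j'. x (i',j')"] by simp
      then show ?thesis unfolding E_def using x by auto
    qed
    then have "indicator E x = (\<Prod>i'\<in>{..<i}. 1 - (if Q i' then 1 else 0 :: real))"
      by (simp add: prod_ind indicator_def)
    also have "\<dots> = (\<Sum>T\<in>Pow {..<i}. (-1) ^ card T * (\<Prod>i'\<in>T. (if Q i' then 1 else 0 :: real)))"
      by (rule prod_one_minus) simp
    also have "\<dots> = (\<Sum>T\<in>Pow {..<i}. (-1) ^ card T * indicator (G T) x)"
    proof (intro sum.cong refl)
      fix T assume T: "T \<in> Pow {..<i}"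
      then have fT: "finite T" using finite_subset by auto
      have "x \<in> G T \<longleftrightarrow> (\<forall>i'\<in>T. Q i')"
        unfolding G_def Q_def rel_def using x by auto
      then show "(-1) ^ card T * (\<Prod>i'\<in>T. (if Q i' then 1 else 0 :: real)) = (-1) ^ card T * indicator (G T) x"
        by (simp add: prod_ind[OF fT] indicator_def)
    qed
    finally show ?thesis .
  qed
  have mG: "measure ?M (G T) = real l / (real (card T * k) + real l)" if T: "T \<subseteq> {..<i}" for T
  proof -
    have fT: "finite T" using T finite_subset by auto
    have "measure ?M (G T) = real (card ({i}\<times>{..<l})) / (real (card (T\<times>{..<k})) + real (card ({i}\<times>{..<l})))"
    proof -
      have "(i, 0) \<in> {i}\<times>{..<l}" using assms by simp
      then have l0: "{i}\<times>{..<l} \<noteq> {}" by blast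
      show ?thesis
        unfolding G_def by (rule key) (use T assms fI l0 in \<open>auto simp: I_def\<close>)
    qed
    then show ?thesis by (simp add: card_cartesian_product)
  qed
  have "measure ?M E = integral\<^sup>L ?M (indicator E)"
    using Es by simp
  also have "\<dots> = integral\<^sup>L ?M (\<lambda>x. \<Sum>T\<in>Pow {..<i}. (-1) ^ card T * indicator (G T) x :: real)"
    by (rule Bochner_Integration.integral_cong) (auto simp: pw)
  also have "\<dots> = (\<Sum>T\<in>Pow {..<i}. integral\<^sup>L ?M (\<lambda>x. (-1) ^ card T * indicator (G T) x :: real))"
    by (rule Bochner_Integration.integral_sum) (auto intro!: integrable_mult_right integrable_real_indicator Gs simp: less_top[symmetric] P.emeasure_finite)
  also have "\<dots> = (\<Sum>T\<in>Pow {..<i}. (-1) ^ card T * measure ?M (G T))"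
  proof (rule sum.cong[OF refl])
    fix T assume T: "T \<in> Pow {..<i}"
    have "integral\<^sup>L ?M (\<lambda>x. (-1) ^ card T * indicator (G T) x :: real) = (-1) ^ card T * integral\<^sup>L ?M (indicator (G T) :: _ \<Rightarrow> real)"
      by (rule integral_mult_right_zero)
    also have "integral\<^sup>L ?M (indicator (G T) :: _ \<Rightarrow> real) = measure ?M (G T)"
      using Gs T by (simp add: sets.Int_space_eq2)
    finally show "integral\<^sup>L ?M (\<lambda>x. (-1) ^ card T * indicator (G T) x :: real) = (-1) ^ card T * measure ?M (G T)" .
  qed
  also have "\<dots> = (\<Sum>T\<in>Pow {..<i}. (-1) ^ card T * (real l / (real (card T * k) + real l)))"
    by (intro sum.cong refl) (simp add: mG)
  finally show ?thesis unfolding E_def I_def .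
qed



lemma pascal_sum:
  fixes g :: "nat \<Rightarrow> real"
  shows "(\<Sum>s\<le>Suc m. of_nat (Suc m choose s) * g s) = (\<Sum>s\<le>m. of_nat (m choose s) * g s) + (\<Sum>s\<le>m. of_nat (m choose s) * g (Suc s))"
proof -
  have "(\<Sum>s\<le>Suc m. of_nat (Suc m choose s) * g s) = g 0 + (\<Sum>s\<le>m. of_nat (Suc m choose Suc s) * g (Suc s))"
    by (simp add: sum.atMost_Suc_shift del: sum.atMost_Suc binomial_Suc_Suc)
  also have "\<dots> = (g 0 + (\<Sum>s\<le>m. of_nat (m choose Suc s) * g (Suc s))) + (\<Sum>s\<le>m. of_nat (m choose s) * g (Suc s))"
    by (simp add: sum.distrib algebra_simps)
  also have "g 0 + (\<Sum>s\<le>m. of_nat (m choose Suc s) * g (Suc s)) = (\<Sum>s\<le>m. of_nat (m choose s) * g s)"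
  proof -
    have "(\<Sum>s\<le>m. of_nat (m choose s) * g s) = (\<Sum>s\<le>Suc m. of_nat (m choose s) * g s)" by simp
    also have "\<dots> = g 0 + (\<Sum>s\<le>m. of_nat (m choose Suc s) * g (Suc s))"
      by (simp add: sum.atMost_Suc_shift del: sum.atMost_Suc)
    finally show ?thesis by simp
  qed
  finally show ?thesis .
qed

lemma pow_sum:
  fixes g :: "nat \<Rightarrow> real"
  assumes "finite A"
  shows "(\<Sum>T\<in>Pow A. g (card T)) = (\<Sum>s\<le>card A. of_nat (card A choose s) * g s)"
  using assms
proof (induction A arbitrary: g rule: finite_induct)
  case empty then show ?case by simp
next
  case (insert a A)
  have inj: "inj_on (insert a) (Pow A)"
    using insert.hyps by (auto simp: inj_on_def)
  have "(\<Sum>T\<in>Pow (insert a A). g (card T)) = (\<Sum>T\<in>Pow A. g (card T)) + (\<Sum>T\<in>insert a ` Pow A. g (card T))"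
    unfolding Pow_insert using insert.hyps
    by (intro sum.union_disjoint) auto
  also have "(\<Sum>T\<in>insert a ` Pow A. g (card T)) = (\<Sum>T\<in>Pow A. g (card (insert a T)))"
    by (simp add: sum.reindex[OF inj])
  also have "\<dots> = (\<Sum>T\<in>Pow A. g (Suc (card T)))"
  proof (intro sum.cong refl)
    fix T assume "T \<in> Pow A"
    then have "finite T" "a \<notin> T" using insert.hyps finite_subset by auto
    then show "g (card (insert a T)) = g (Suc (card T))" by simp
  qed
  also have "(\<Sum>T\<in>Pow A. g (card T)) + (\<Sum>T\<in>Pow A. g (Suc (card T))) =
     (\<Sum>s\<le>card A. of_nat (card A choose s) * g s) + (\<Sum>s\<le>card A. of_nat (card A choose s) * g (Suc s))"
    using insert.IH[of g] insert.IH[of "\<lambda>s. g (Suc s)"] by simp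
  also have "\<dots> = (\<Sum>s\<le>Suc (card A). of_nat (Suc (card A) choose s) * g s)"
    by (rule pascal_sum[symmetric])
  also have "Suc (card A) = card (insert a A)" using insert.hyps by simp
  finally show ?case .
qed

lemma prod_shift:
  fixes a :: real
  assumes "a > 0"
  shows "(\<Prod>s=1..r. real s / (real s + (a + 1))) = (\<Prod>s=1..r. real s / (real s + a)) * (a + 1) / (a + real r + 1)"
proof (induction r)
  case 0 then show ?case using assms by simp
next
  case (Suc r)
  have "(\<Prod>s=1..Suc r. real s / (real s + (a + 1))) = (real (Suc r) / (real (Suc r) + (a+1))) * (\<Prod>s=1..r. real s / (real s + (a + 1)))"
    by (simp add: prod.nat_ivl_Suc')
  also have "\<dots> = (real (Suc r) / (real (Suc r) + (a+1))) * ((\<Prod>s=1..r. real s / (real s + a)) * (a + 1) / (a + real r + 1))"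
    using Suc by simp
  also have "\<dots> = ((real (Suc r) / (real (Suc r) + a)) * (\<Prod>s=1..r. real s / (real s + a))) * (a + 1) / (a + real (Suc r) + 1)"
    using assms by (simp add: field_simps)
  also have "\<dots> = (\<Prod>s=1..Suc r. real s / (real s + a)) * (a + 1) / (a + real (Suc r) + 1)"
    by (simp add: prod.nat_ivl_Suc')
  finally show ?case .
qed

lemma ident:
  fixes a :: real
  assumes "a > 0"
  shows "(\<Sum>s\<le>r. of_nat (r choose s) * ((-1) ^ s * (a / (a + real s)))) = (\<Prod>s=1..r. real s / (real s + a))"
  using assms
proof (induction r arbitrary: a)
  case 0 then show ?case by simp
next
  case (Suc r)
  have a: "a > 0" by fact
  have e: "(-1) ^ Suc s * (a / (a + real (Suc s))) = - (a / (a + 1)) * ((-1) ^ s * ((a + 1) / ((a + 1) + real s)))" for s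
  proof -
    have n1: "a + 1 \<noteq> 0" "a + 1 + real s \<noteq> 0" using a by linarith+
    have h: "a/(a + real (Suc s)) = (a/(a+1)) * ((a+1)/((a+1)+real s))"
      using n1 by (simp add: add_ac)
    show ?thesis unfolding h by (simp add: mult_ac)
  qed
  have "(\<Sum>s\<le>Suc r. of_nat (Suc r choose s) * ((-1) ^ s * (a / (a + real s))))
     = (\<Sum>s\<le>r. of_nat (r choose s) * ((-1) ^ s * (a / (a + real s)))) +
       (\<Sum>s\<le>r. of_nat (r choose s) * ((-1) ^ Suc s * (a / (a + real (Suc s)))))"
    by (rule pascal_sum)
  also have "(\<Sum>s\<le>r. of_nat (r choose s) * ((-1) ^ Suc s * (a / (a + real (Suc s)))))
     = - (a / (a + 1)) * (\<Sum>s\<le>r. of_nat (r choose s) * ((-1) ^ s * ((a + 1) / ((a + 1) + real s))))"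
    unfolding e by (simp add: sum_distrib_left algebra_simps)
  also have "(\<Sum>s\<le>r. of_nat (r choose s) * ((-1) ^ s * ((a + 1) / ((a + 1) + real s)))) = (\<Prod>s=1..r. real s / (real s + (a + 1)))"
    using a by (intro Suc.IH) simp
  also have "(\<Sum>s\<le>r. of_nat (r choose s) * ((-1) ^ s * (a / (a + real s)))) = (\<Prod>s=1..r. real s / (real s + a))"
    using a by (intro Suc.IH)
  also have "(\<Prod>s=1..r. real s / (real s + a)) + - (a / (a + 1)) * (\<Prod>s=1..r. real s / (real s + (a + 1)))
      = (\<Prod>s=1..r. real s / (real s + a)) * (real (Suc r) / (real (Suc r) + a))"
  proof -
    define P where "P = (\<Prod>s=1..r. real s / (real s + a))"
    have nz: "a + 1 \<noteq> 0" "a + real r + 1 \<noteq> 0" "real (Suc r) + a \<noteq> 0" using a by linarith+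
    have h1: "(a/(a+1)) * (P*(a+1)/(a + real r + 1)) = P*a/(a + real r + 1)"
    proof -
      have "(a/(a+1)) * (P*(a+1)/(a + real r + 1)) = (a/(a+1) * (a+1)) * P / (a + real r + 1)" by (simp add: mult_ac)
      also have "a/(a+1) * (a+1) = a" using nz by simp
      finally show ?thesis by (simp add: mult_ac)
    qed
    have h2: "P - P*a/(a + real r + 1) = P * (real (Suc r) / (real (Suc r) + a))"
      using a by (simp add: field_simps)
    have "P + - (a / (a + 1)) * (P * (a + 1) / (a + real r + 1)) = P * (real (Suc r) / (real (Suc r) + a))"
      by (simp only: diff_conv_add_uminus[symmetric] mult_minus_left h1 h2)
    then show ?thesis unfolding prod_shift[OF a] P_def .
  qed
  also have "\<dots> = (\<Prod>s=1..Suc r. real s / (real s + a))"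
    by (simp add: prod.nat_ivl_Suc')
  finally show ?case .
qed



lemma E_sets:
  fixes i n l k :: nat
  assumes "i < n" "l \<le> k"
  shows "{x\<in>space (PiM ({..<n}\<times>{..<k}) (\<lambda>_. U)). \<forall>j<l. \<forall>i'<i. \<exists>j'<k. x (i,j) \<le> x (i',j')}
     \<in> sets (PiM ({..<n}\<times>{..<k}) (\<lambda>_. U))"
proof -
  let ?M = "PiM ({..<n}\<times>{..<k}) (\<lambda>_. U)"
  have E_alt: "{x\<in>space ?M. \<forall>j<l. \<forall>i'<i. \<exists>j'<k. x (i,j) \<le> x (i',j')}
     = {x\<in>space ?M. \<forall>(j,i')\<in>{..<l}\<times>{..<i}. \<exists>j'\<in>{..<k}. rel False (x (i,j)) (x (i',j'))}"
    unfolding rel_def by auto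
  show ?thesis
    unfolding E_alt
    by (rule sets.sets_Collect_finite_All, clarify, rule sets.sets_Collect_finite_Ex, rule pred_rel_PiM)
       (use assms in auto)
qed

definition Qf :: "nat \<Rightarrow> nat \<Rightarrow> nat \<Rightarrow> real" where
  "Qf k i l = (\<Prod>r=1..i. real (r * k) / real (r * k + l))"

definition hf :: "nat \<Rightarrow> nat \<Rightarrow> nat \<Rightarrow> real" where
  "hf k l s = (-1) ^ s * (real l / (real (s * k) + real l))"

lemma Q_sum:
  assumes "1 \<le> l" "1 \<le> k"
  shows "Qf k i l = (\<Sum>s\<le>i. of_nat (i choose s) * hf k l s)"
proof -
  define a where "a = real l / real k"
  have a: "a > 0" using assms by (simp add: a_def)
  have k: "real k > 0" using assms by simp
  have "(\<Sum>s\<le>i. of_nat (i choose s) * hf k l s) = (\<Sum>s\<le>i. of_nat (i choose s) * ((-1) ^ s * (a / (a + real s))))"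
  proof (intro sum.cong refl)
    fix s
    have "real l / (real (s * k) + real l) = a / (a + real s)"
      using k by (simp add: a_def field_simps)
    then show "of_nat (i choose s) * hf k l s = of_nat (i choose s) * ((-1) ^ s * (a / (a + real s)))"
      by (simp add: hf_def)
  qed
  also have "\<dots> = (\<Prod>s=1..i. real s / (real s + a))" by (rule ident[OF a])
  also have "\<dots> = Qf k i l"
    unfolding Qf_def
  proof (intro prod.cong refl)
    fix s
    show "real s / (real s + a) = real (s * k) / real (s * k + l)"
      using k by (simp add: a_def field_simps)
  qed
  finally show ?thesis ..
qed

lemma measure_Q:
  fixes i n l k :: nat
  assumes "i < n" "l < k"
  shows "measure (PiM ({..<n}\<times>{..<k}) (\<lambda>_. U))
     {x\<in>space (PiM ({..<n}\<times>{..<k}) (\<lambda>_. U)). \<forall>j<l. \<forall>i'<i. \<exists>j'<k. x (i,j) \<le> x (i',j')} = Qf k i l"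
proof (cases "l = 0")
  case True
  interpret P: prob_space "PiM ({..<n}\<times>{..<k}) (\<lambda>_. U)" by (rule prob_space_PU)
  have "Qf k i l = 1" unfolding Qf_def using True assms by (intro prod.neutral) auto
  then show ?thesis using True by (simp add: P.prob_space)
next
  case False
  then have l: "1 \<le> l" by simp
  have k: "1 \<le> k" using assms by simp
  have "measure (PiM ({..<n}\<times>{..<k}) (\<lambda>_. U))
     {x\<in>space (PiM ({..<n}\<times>{..<k}) (\<lambda>_. U)). \<forall>j<l. \<forall>i'<i. \<exists>j'<k. x (i,j) \<le> x (i',j')}
     = (\<Sum>T\<in>Pow {..<i}. (-1) ^ card T * (real l / (real (card T * k) + real l)))"
    by (rule measure_E) (use assms l in auto)
  also have "\<dots> = (\<Sum>T\<in>Pow {..<i}. hf k l (card T))" by (simp add: hf_def)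
  also have "\<dots> = (\<Sum>s\<le>i. of_nat (i choose s) * hf k l s)"
    using pow_sum[of "{..<i}" "hf k l"] by simp
  also have "\<dots> = Qf k i l" by (rule Q_sum[symmetric, OF l k])
  finally show ?thesis .
qed

lemma split0:
  fixes f :: "nat \<Rightarrow> real"
  assumes "m \<ge> 1"
  shows "(\<Sum>x<m. f x) = f 0 + (\<Sum>x=1..m-1. f x)"
proof -
  have "{..<m} = insert 0 {1..m-1}" using assms by auto
  then show ?thesis by simp
qed

lemma expectation_reads:
  assumes "n \<ge> 1" "k \<ge> 1"
  shows "(\<integral>A. real (reads n k (\<lambda>i j. A (i, j))) \<partial>matrix_measure n k) = (\<Sum>i<n. \<Sum>l<k. Qf k i l)"
proof -
  let ?M = "PiM ({..<n}\<times>{..<k}) (\<lambda>_. U)"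
  interpret P: prob_space ?M by (rule prob_space_PU)
  have M: "matrix_measure n k = ?M" by (simp add: matrix_measure_def U_def)
  define E where "E i l = {x\<in>space ?M. \<forall>j<l. \<forall>i'<i. \<exists>j'<k. x (i,j) \<le> x (i',j')}" for i l
  have Es: "i < n \<Longrightarrow> l < k \<Longrightarrow> E i l \<in> sets ?M" for i l
    unfolding E_def by (rule E_sets) auto
  have "(\<integral>A. real (reads n k (\<lambda>i j. A (i, j))) \<partial>?M) = (\<integral>A. (\<Sum>i<n. \<Sum>l<k. indicator (E i l) A :: real) \<partial>?M)"
  proof (rule Bochner_Integration.integral_cong[OF refl])
    fix A assume A: "A \<in> space ?M"
    show "real (reads n k (\<lambda>i j. A (i, j))) = (\<Sum>i<n. \<Sum>l<k. indicator (E i l) A :: real)"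
      unfolding reads_eq of_nat_sum
      by (intro sum.cong refl) (use A in \<open>simp add: E_def indicator_def\<close>)
  qed
  also have "\<dots> = (\<Sum>i<n. \<integral>A. (\<Sum>l<k. indicator (E i l) A :: real) \<partial>?M)"
    by (rule Bochner_Integration.integral_sum)
       (auto intro!: Bochner_Integration.integrable_sum integrable_real_indicator Es simp: less_top[symmetric] P.emeasure_finite)
  also have "\<dots> = (\<Sum>i<n. \<Sum>l<k. \<integral>A. (indicator (E i l) A :: real) \<partial>?M)"
    by (intro sum.cong refl Bochner_Integration.integral_sum)
       (auto intro!: integrable_real_indicator Es simp: less_top[symmetric] P.emeasure_finite)
  also have "\<dots> = (\<Sum>i<n. \<Sum>l<k. Qf k i l)"
  proof (intro sum.cong refl)
    fix i l assume "i \<in> {..<n}" "l \<in> {..<k}"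
    then have il: "i < n" "l < k" by auto
    have "(\<integral>A. (indicator (E i l) A :: real) \<partial>?M) = measure ?M (E i l)"
      using Es[OF il] by (simp add: sets.Int_space_eq2)
    also have "\<dots> = Qf k i l" unfolding E_def by (rule measure_Q[OF il])
    finally show "(\<integral>A. (indicator (E i l) A :: real) \<partial>?M) = Qf k i l" .
  qed
  finally show ?thesis unfolding M .
qed



lemma Qf_l0: "k \<ge> 1 \<Longrightarrow> Qf k i 0 = 1"
  unfolding Qf_def by (intro prod.neutral) auto

lemma Qf_i0: "Qf k 0 l = 1"
  unfolding Qf_def by simp

lemma row_sum1:
  assumes "n \<ge> 1" "l \<ge> 1" "k \<ge> 1"
  shows "(\<Sum>i<n. Qf k i l) = real n + (\<Sum>j=1..n-1. real (n choose (j+1)) * (-1) ^ j * (real l / real (l + j * k)))"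
proof -
  have "(\<Sum>i<n. Qf k i l) = (\<Sum>i<n. \<Sum>s\<le>i. of_nat (i choose s) * hf k l s)"
    using assms by (simp add: Q_sum)
  also have "\<dots> = (\<Sum>i<n. \<Sum>s<n. of_nat (i choose s) * hf k l s)"
  proof (rule sum.cong[OF refl])
    fix i assume "i \<in> {..<n}"
    then show "(\<Sum>s\<le>i. of_nat (i choose s) * hf k l s) = (\<Sum>s<n. of_nat (i choose s) * hf k l s)"
      by (intro sum.mono_neutral_left) auto
  qed
  also have "\<dots> = (\<Sum>s<n. (\<Sum>i<n. of_nat (i choose s)) * hf k l s)"
    by (subst sum.swap) (simp add: sum_distrib_right)
  also have "\<dots> = (\<Sum>s<n. of_nat (n choose Suc s) * hf k l s)"
  proof (rule sum.cong[OF refl])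
    fix s
    have n: "{..<n} = {..n-1}" using assms by auto
    have "(\<Sum>i<n. i choose s) = n choose Suc s"
      unfolding n using sum_choose_upper[of s "n-1"] assms by simp
    then show "(\<Sum>i<n. of_nat (i choose s)) * hf k l s = of_nat (n choose Suc s) * hf k l s"
      by (metis of_nat_sum)
  qed
  also have "\<dots> = of_nat (n choose Suc 0) * hf k l 0 + (\<Sum>j=1..n-1. of_nat (n choose Suc j) * hf k l j)"
    by (rule split0[OF assms(1)])
  also have "\<dots> = real n + (\<Sum>j=1..n-1. real (n choose (j+1)) * (-1) ^ j * (real l / real (l + j * k)))"
    using assms by (simp add: hf_def add.commute mult.assoc)
  finally show ?thesis .
qed

theorem mainTheorem1:
  fixes n k :: nat
  assumes "n \<ge> 1" and "k \<ge> 1"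
  shows "(\<integral>A. real (reads n k (\<lambda>i j. A (i, j))) \<partial>matrix_measure n k)
           = real (n * k) + (\<Sum>l=1..k-1. \<Sum>j=1..n-1.
               real (n choose (j+1)) * (-1) ^ j * (real l / real (l + j * k)))
      \<and> (\<integral>A. real (reads n k (\<lambda>i j. A (i, j))) \<partial>matrix_measure n k)
           = real (n + k - 1) + (\<Sum>l=1..k-1. \<Sum>j=1..n-1.
               \<Prod>r=1..j. real (r * k) / real (r * k + l))"
proof -
  have E: "(\<integral>A. real (reads n k (\<lambda>i j. A (i, j))) \<partial>matrix_measure n k) = (\<Sum>l<k. \<Sum>i<n. Qf k i l)"
    unfolding expectation_reads[OF assms] by (rule sum.swap)
  have split: "(\<Sum>l<k. \<Sum>i<n. Qf k i l) = real n + (\<Sum>l=1..k-1. \<Sum>i<n. Qf k i l)"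
    using split0[OF assms(2), of "\<lambda>l. \<Sum>i<n. Qf k i l"] assms by (simp add: Qf_l0)
  have f1: "(\<Sum>l<k. \<Sum>i<n. Qf k i l) = real (n * k) + (\<Sum>l=1..k-1. \<Sum>j=1..n-1.
               real (n choose (j+1)) * (-1) ^ j * (real l / real (l + j * k)))"
  proof -
    have "(\<Sum>l=1..k-1. \<Sum>i<n. Qf k i l) = (\<Sum>l=1..k-1. real n + (\<Sum>j=1..n-1.
               real (n choose (j+1)) * (-1) ^ j * (real l / real (l + j * k))))"
      using assms by (intro sum.cong refl row_sum1) auto
    also have "\<dots> = real (k - 1) * real n + (\<Sum>l=1..k-1. \<Sum>j=1..n-1.
               real (n choose (j+1)) * (-1) ^ j * (real l / real (l + j * k)))"
      by (simp add: sum.distrib)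
    finally show ?thesis unfolding split using assms
      by (simp add: of_nat_diff algebra_simps)
  qed
  have f2: "(\<Sum>l<k. \<Sum>i<n. Qf k i l) = real (n + k - 1) + (\<Sum>l=1..k-1. \<Sum>j=1..n-1.
               \<Prod>r=1..j. real (r * k) / real (r * k + l))"
  proof -
    have "(\<Sum>l=1..k-1. \<Sum>i<n. Qf k i l) = (\<Sum>l=1..k-1. 1 + (\<Sum>j=1..n-1. Qf k j l))"
      using assms by (intro sum.cong refl) (simp add: split0 Qf_i0)
    also have "\<dots> = real (k - 1) + (\<Sum>l=1..k-1. \<Sum>j=1..n-1. \<Prod>r=1..j. real (r * k) / real (r * k + l))"
      by (simp add: sum.distrib Qf_def)
    finally show ?thesis unfolding split using assms
      by (simp add: of_nat_diff algebra_simps)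
  qed
  show ?thesis using E f1 f2 by simp
qed


end
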